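(* If $S=\{v_1,\ldots,v_n\}\subset\mathbb Z^n$ is an orthogonal subset with $|V_\alpha|\ge2$ for all $\alpha$, then $p_1(S)=0$.
   Context: $\mathbb Z^n$ carries the standard dot product with standard basis $e_1,\ldots,e_n$. $S$ is orthogonal if $\langle v_i,v_i\rangle\ge1$ for all $i$ and $\langle v_i,v_j\rangle=0$ for $i\ne j$. $V_\alpha=\{j:\langle v_\alpha,e_j\rangle\ne0\}$, $E_j=\{\alpha:\langle v_\alpha,e_j\rangle\ne0\}$, and $p_1(S)=|\{j:|E_j|=1\}|$. *)

theory Defs
  imports Main
begin

text \<open>Vectors of Z^n are represented as functions nat => int; only coordinates 0..n-1 matter.
  The family v_1,...,v_n is indexed by alpha in {0..<n}.\<close>

definition dotZ :: "nat \<Rightarrow> (nat \<Rightarrow> int) \<Rightarrow> (nat \<Rightarrow> int) \<Rightarrow> int" where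
  "dotZ n x y = (\<Sum>j<n. x j * y j)"

definition std_basis :: "nat \<Rightarrow> nat \<Rightarrow> int" where
  "std_basis j = (\<lambda>i. if i = j then 1 else 0)"

definition orthogonal_family :: "nat \<Rightarrow> (nat \<Rightarrow> nat \<Rightarrow> int) \<Rightarrow> bool" where
  "orthogonal_family n v \<longleftrightarrow>
     (\<forall>\<alpha><n. dotZ n (v \<alpha>) (v \<alpha>) \<ge> 1) \<and>
     (\<forall>\<alpha><n. \<forall>\<beta><n. \<alpha> \<noteq> \<beta> \<longrightarrow> dotZ n (v \<alpha>) (v \<beta>) = 0)"

definition Vset :: "nat \<Rightarrow> (nat \<Rightarrow> nat \<Rightarrow> int) \<Rightarrow> nat \<Rightarrow> nat set" where
  "Vset n v \<alpha> = {j. j < n \<and> dotZ n (v \<alpha>) (std_basis j) \<noteq> 0}"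

definition Eset :: "nat \<Rightarrow> (nat \<Rightarrow> nat \<Rightarrow> int) \<Rightarrow> nat \<Rightarrow> nat set" where
  "Eset n v j = {\<alpha>. \<alpha> < n \<and> dotZ n (v \<alpha>) (std_basis j) \<noteq> 0}"

definition p1 :: "nat \<Rightarrow> (nat \<Rightarrow> nat \<Rightarrow> int) \<Rightarrow> nat" where
  "p1 n v = card {j. j < n \<and> card (Eset n v j) = 1}"

end

theory Submission
  imports Defs "Jordan_Normal_Form.Determinant"
begin

lemma dot_basis: "j < n \<Longrightarrow> dotZ n x (std_basis j) = x j"
  unfolding dotZ_def std_basis_def
  by (simp add: if_distrib sum.delta cong: if_cong)

lemma key:
  fixes n :: nat and v :: "nat \<Rightarrow> nat \<Rightarrow> int"
  assumes "orthogonal_family n v" and i: "i < n" and j: "j < n" and ij: "i \<noteq> j"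
  shows "(\<Sum>b<n. real_of_int (v b i) * real_of_int (v b j) / real_of_int (dotZ n (v b) (v b))) = 0"
proof -
  define d where "d b = real_of_int (dotZ n (v b) (v b))" for b
  have dpos: "b < n \<Longrightarrow> d b \<noteq> 0" for b using assms(1) unfolding orthogonal_family_def d_def by force
  have dot: "a < n \<Longrightarrow> c < n \<Longrightarrow> (\<Sum>k<n. real_of_int (v a k) * real_of_int (v c k)) = (if a = c then d a else 0)" for a c
  proof -
    assume a: "a < n" and c: "c < n"
    have "(\<Sum>k<n. real_of_int (v a k) * real_of_int (v c k)) = real_of_int (dotZ n (v a) (v c))"
      unfolding dotZ_def by simp
    then show ?thesis using assms(1) a c unfolding orthogonal_family_def d_def by auto
  qed
  define A :: "real mat" where "A = mat n n (\<lambda>(a,k). real_of_int (v a k))"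
  define B :: "real mat" where "B = mat n n (\<lambda>(k,c). real_of_int (v c k) / d c)"
  have AB: "A * B = 1\<^sub>m n"
  proof (rule eq_matI)
    fix a c assume a: "a < dim_row (1\<^sub>m n)" and c: "c < dim_col (1\<^sub>m n)"
    hence a: "a < n" and c: "c < n" by auto
    have "(A * B) $$ (a,c) = (\<Sum>k\<in>{0..<n}. real_of_int (v a k) * (real_of_int (v c k) / d c))"
      using a c unfolding A_def B_def by (simp add: scalar_prod_def)
    also have "\<dots> = (\<Sum>k<n. real_of_int (v a k) * real_of_int (v c k)) / d c"
      by (simp add: sum_divide_distrib atLeast0LessThan)
    also have "\<dots> = 1\<^sub>m n $$ (a,c)" using dot[OF a c] dpos[OF c] a c by simp
    finally show "(A * B) $$ (a,c) = 1\<^sub>m n $$ (a,c)" .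
  qed (auto simp: A_def B_def)
  have BA: "B * A = 1\<^sub>m n"
    by (rule mat_mult_left_right_inverse[OF _ _ AB]) (auto simp: A_def B_def)
  have "(B * A) $$ (i,j) = 0" using BA i j ij by simp
  moreover have "(B * A) $$ (i,j) = (\<Sum>b\<in>{0..<n}. real_of_int (v b i) / d b * real_of_int (v b j))"
    using i j unfolding A_def B_def by (simp add: scalar_prod_def)
  ultimately show ?thesis unfolding d_def by (simp add: atLeast0LessThan mult.commute mult.left_commute)
qed

theorem lemma4p1:
  fixes n :: nat and v :: "nat \<Rightarrow> nat \<Rightarrow> int"
  assumes "orthogonal_family n v"
    and "\<forall>\<alpha><n. card (Vset n v \<alpha>) \<ge> 2"
  shows "p1 n v = 0"
proof (rule ccontr)
  assume "p1 n v \<noteq> 0"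
  then obtain j where j: "j < n" and cj: "card (Eset n v j) = 1"
    unfolding p1_def by (metis (mono_tags, lifting) card.empty empty_Collect_eq)
  then obtain a where Ea: "Eset n v j = {a}" by (meson card_1_singletonE)
  have a: "a < n" and vaj: "v a j \<noteq> 0" using Ea j dot_basis[OF j] unfolding Eset_def by auto
  have others: "b < n \<Longrightarrow> b \<noteq> a \<Longrightarrow> v b j = 0" for b
  proof -
    assume b: "b < n" "b \<noteq> a"
    hence "b \<notin> Eset n v j" using Ea by simp
    thus ?thesis using b(1) dot_basis[OF j, of "v b"] unfolding Eset_def by simp
  qed
  have "card (Vset n v a) \<ge> 2" using assms(2) a by auto
  have fin: "finite (Vset n v a)" unfolding Vset_def by auto
  have "Vset n v a - {j} \<noteq> {}"
  proof
    assume "Vset n v a - {j} = {}"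
    hence "Vset n v a \<subseteq> {j}" by blast
    hence "card (Vset n v a) \<le> card {j}" by (intro card_mono) auto
    with \<open>card (Vset n v a) \<ge> 2\<close> show False by simp
  qed
  then obtain i where i: "i \<in> Vset n v a" "i \<noteq> j" by blast
  hence i2: "i < n" and vai: "v a i \<noteq> 0" using dot_basis unfolding Vset_def by auto
  define d where "d b = real_of_int (dotZ n (v b) (v b))" for b
  have dpos: "d a \<noteq> 0" using assms(1) a unfolding orthogonal_family_def d_def by force
  have "(\<Sum>b<n. real_of_int (v b i) * real_of_int (v b j) / d b)
        = real_of_int (v a i) * real_of_int (v a j) / d a"
  proof -
    have "(\<Sum>b<n. real_of_int (v b i) * real_of_int (v b j) / d b)
       = real_of_int (v a i) * real_of_int (v a j) / d a
         + (\<Sum>b\<in>{..<n}-{a}. real_of_int (v b i) * real_of_int (v b j) / d b)"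
      using a by (simp add: sum.remove)
    also have "(\<Sum>b\<in>{..<n}-{a}. real_of_int (v b i) * real_of_int (v b j) / d b) = 0"
      using others by (intro sum.neutral) auto
    finally show ?thesis by simp
  qed
  moreover have "(\<Sum>b<n. real_of_int (v b i) * real_of_int (v b j) / d b) = 0"
    using key[OF assms(1) i2 j i(2)] unfolding d_def .
  ultimately show False using vai vaj dpos by simp
qed

end
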